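(* Let $v$ be a node of degree $d\ge1$ in an undirected graph, and let $\epsilon\in(0,1)$, $\delta\in(0,1)$. Suppose $\ell$ independent traces of the cascade process with $p=1$ and known rate $\lambda>0$ start from $v$, and for trace $i$ let $t_i$ be the difference between the infection time of the second node of the trace and that of $v$. Let $T=\sum_{i=1}^{\ell}t_i$ and let the degree algorithm return $\hat d=\frac{\ell}{T\lambda}$. There is an absolute constant $C$ such that if $\ell\ge C\frac{\ln\delta^{-1}}{\epsilon^2}$, then $\Pr\left[|\hat d-d|\le\epsilon d\right]\ge1-\delta$.
   Context: Cascade process with $p=1$ and rate $\lambda$ from source $v$: every edge receives an independent length drawn from $\mathrm{Exp}(\lambda)$ (rate $\lambda$); the infection time of each node is its shortest-path distance from $v$ (so $v$ has infection time $0$); the trace lists the nodes in increasing order of infection time with their times. *)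

theory Defs
  imports "HOL-Probability.Probability"
begin

definition ugraph :: "nat set \<Rightarrow> nat set set \<Rightarrow> bool" where
  "ugraph V E \<longleftrightarrow> finite V \<and> (\<forall>e\<in>E. e \<subseteq> V \<and> card e = 2)"

definition degree :: "nat set set \<Rightarrow> nat \<Rightarrow> nat" where
  "degree E v = card {u. {v, u} \<in> E}"

fun is_walk :: "nat set set \<Rightarrow> nat list \<Rightarrow> bool" where
  "is_walk E [] = False"
| "is_walk E [u] = True"
| "is_walk E (u # w # ws) = ({u, w} \<in> E \<and> is_walk E (w # ws))"

fun walk_len :: "(nat set \<Rightarrow> real) \<Rightarrow> nat list \<Rightarrow> real" where
  "walk_len L [] = 0"
| "walk_len L [u] = 0"
| "walk_len L (u # w # ws) = L {u, w} + walk_len L (w # ws)"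

definition reachable :: "nat set set \<Rightarrow> nat \<Rightarrow> nat \<Rightarrow> bool" where
  "reachable E v u \<longleftrightarrow> (\<exists>p. is_walk E p \<and> hd p = v \<and> last p = u)"

definition infection_time :: "nat set set \<Rightarrow> (nat set \<Rightarrow> real) \<Rightarrow> nat \<Rightarrow> nat \<Rightarrow> real" where
  "infection_time E L v u =
     Inf {walk_len L p | p. is_walk E p \<and> hd p = v \<and> last p = u}"

text \<open>Infection time of the second node of the trace minus that of the source v
 (the trace lists infected nodes by increasing infection time; the second node is the
 infected node other than v with the smallest infection time).\<close>
definition second_gap :: "nat set set \<Rightarrow> (nat set \<Rightarrow> real) \<Rightarrow> nat \<Rightarrow> real" where
  "second_gap E L v =
     Min (infection_time E L v ` {u. u \<noteq> v \<and> reachable E v u}) - infection_time E L v v"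

text \<open>Probability space of l independent traces: trace i uses independent
 Exp(lam) edge lengths \<omega> i e for every edge e.\<close>
definition cascade_space :: "nat set set \<Rightarrow> real \<Rightarrow> nat \<Rightarrow> (nat \<Rightarrow> nat set \<Rightarrow> real) measure" where
  "cascade_space E lam l =
     PiM {..<l} (\<lambda>i. PiM E (\<lambda>e. density lborel (exponential_density lam)))"

definition degree_estimate :: "nat set set \<Rightarrow> real \<Rightarrow> nat \<Rightarrow> nat \<Rightarrow> (nat \<Rightarrow> nat set \<Rightarrow> real) \<Rightarrow> real" where
  "degree_estimate E lam l v \<omega> = real l / ((\<Sum>i<l. second_gap E (\<omega> i) v) * lam)"

end

theory Submission
  imports Defs
begin

lemma exp_le_inv: fixes x::real assumes "x < 1" shows "exp x \<le> 1/(1-x)"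
proof -
  have "1 - x \<le> exp (-x)" using exp_ge_add_one_self[of "-x"] by simp
  hence "1 - x \<le> 1/exp x" by (simp add: exp_minus field_simps)
  thus ?thesis using assms by (simp add: field_simps)
qed

lemma exp_quad_le: fixes t::real assumes "t \<ge> -1/2" shows "exp (t - 2*t^2) \<le> 1 + t"
proof -
  have "2*t^2 - t + 1 = 2*(t - 1/4)^2 + 7/8" by (simp add: power2_eq_square algebra_simps)
  moreover have "(t - 1/4)^2 \<ge> 0" by simp
  ultimately have x1: "t - 2*t^2 < 1" by linarith
  have "exp (t - 2*t^2) \<le> 1/(1 - (t - 2*t^2))" by (rule exp_le_inv[OF x1])
  also have "\<dots> \<le> 1 + t"
  proof -
    have p: "0 < 1 - (t - 2*t^2)" using x1 by simp
    have "1 \<le> (1+t) * (1 - (t - 2*t^2))"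
    proof -
      have "(1+t) * (1 - (t - 2*t^2)) = 1 + t^2*(1+2*t)" by (simp add: algebra_simps power2_eq_square power3_eq_cube)
      moreover have "t^2*(1+2*t) \<ge> 0" using assms by simp
      ultimately show ?thesis by simp
    qed
    thus ?thesis using p by (simp add: field_simps)
  qed
  finally show ?thesis .
qed

lemma ln_pade: fixes x::real assumes "0 \<le> x" shows "2*x/(2+x) \<le> ln (1+x)"
proof -
  let ?h = "\<lambda>x::real. ln (1+x) - 2*x/(2+x)"
  have "?h 0 \<le> ?h x"
  proof (rule DERIV_nonneg_imp_nondecreasing[OF assms])
    fix y::real assume y: "0 \<le> y" "y \<le> x"
    have "DERIV ?h y :> (1/(1+y) - (2*(2+y) - 2*y)/(2+y)^2)"
      using y by (auto intro!: derivative_eq_intros simp: power2_eq_square)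
    moreover have "1/(1+y) - (2*(2+y) - 2*y)/(2+y)^2 \<ge> 0"
    proof -
      have e: "(2*(2+y) - 2*y) = 4" by simp
      have "4*(1+y) \<le> (2+y)^2" by (simp add: power2_eq_square algebra_simps)
      hence "4/(2+y)^2 \<le> 1/(1+y)" using y by (simp add: divide_simps)
      thus ?thesis unfolding e by simp
    qed
    ultimately show "\<exists>d. DERIV ?h y :> d \<and> 0 \<le> d" by blast
  qed
  thus ?thesis by simp
qed

lemma stirling_upper: fixes k::nat assumes "k \<ge> 1"
  shows "fact k * exp (real k) \<le> exp 1 * real k ^ k * sqrt (real k)"
  using assms
proof (induction k rule: dec_induct)
  case base then show ?case by simp
next
  case (step k)
  have k: "real k \<ge> 1" using step by simp
  let ?q = "1 + 1/real k"
  have "1/real k \<ge> 0" by simp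
  hence q: "?q > 0" by linarith
  have "1 \<le> (real k + 1/2) * ln ?q"
  proof -
    have pd: "2*(1/real k)/(2 + 1/real k) \<le> ln ?q" by (rule ln_pade) simp
    have "(real k + 1/2) * (2*(1/real k)/(2 + 1/real k)) \<le> (real k + 1/2) * ln ?q"
      by (rule mult_left_mono[OF pd]) simp
    moreover have "(real k + 1/2) * (2*(1/real k)/(2 + 1/real k)) = 1"
      using k by (simp add: field_simps)
    ultimately show ?thesis by simp
  qed
  hence "exp 1 \<le> exp ((real k + 1/2) * ln ?q)" by simp
  also have "exp ((real k + 1/2) * ln ?q) = ?q ^ k * sqrt ?q"
  proof -
    have "exp ((real k + 1/2) * ln ?q) = exp (real k * ln ?q) * exp (ln ?q / 2)"
      by (simp add: algebra_simps flip: exp_add)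
    also have "exp (real k * ln ?q) = ?q ^ k" using q by (simp add: exp_of_nat_mult)
    also have "exp (ln ?q / 2) = sqrt ?q"
      using q by (simp add: powr_half_sqrt[symmetric] powr_def)
    finally show ?thesis .
  qed
  finally have key: "exp 1 \<le> ?q ^ k * sqrt ?q" .
  have eq: "?q ^ k * sqrt ?q * (real k ^ k * sqrt (real k)) = (real k + 1) ^ k * sqrt (real k + 1)"
  proof -
    have "?q * real k = real k + 1" using k by (simp add: field_simps)
    hence "?q ^ k * real k ^ k = (real k + 1) ^ k" by (metis power_mult_distrib)
    moreover have "sqrt ?q * sqrt (real k) = sqrt (real k + 1)"
      using \<open>?q * real k = real k + 1\<close> by (metis real_sqrt_mult)
    ultimately show ?thesis by (metis mult.commute mult.left_commute)
  qed
  have "fact (Suc k) * exp (real (Suc k)) = (real k + 1) * exp 1 * (fact k * exp (real k))"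
    by (simp add: exp_add algebra_simps)
  also have "\<dots> \<le> (real k + 1) * exp 1 * (exp 1 * real k ^ k * sqrt (real k))"
    using step.IH by (intro mult_left_mono) auto
  also have "\<dots> = (real k + 1) * exp 1 * (exp 1 * (real k ^ k * sqrt (real k)))" by simp
  also have "\<dots> \<le> (real k + 1) * exp 1 * (?q ^ k * sqrt ?q * (real k ^ k * sqrt (real k)))"
    using key by (intro mult_left_mono mult_right_mono) auto
  also have "\<dots> = exp 1 * real (Suc k) ^ Suc k * sqrt (real (Suc k))"
    using eq by (simp add: algebra_simps)
  finally show ?case .
qed

lemma dens_lb: fixes k::nat and y::real assumes k: "k \<ge> 1" and y: "y \<ge> real k / 2"
  shows "exp (-2*(y - real k)^2/real k) / (exp 1 * sqrt (real k)) \<le> erlang_density k 1 y"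
proof -
  have kp: "real k > 0" using k by simp
  have yp: "y > 0" using y kp by simp
  define t where "t = (y - real k)/real k"
  have t: "t \<ge> -1/2" using y kp by (simp add: t_def field_simps)
  have yk: "y / real k = 1 + t" using kp by (simp add: t_def field_simps)
  have "exp (t - 2*t^2) ^ k \<le> (1+t)^k"
    by (rule power_mono[OF exp_quad_le[OF t]]) simp
  also have "exp (t - 2*t^2) ^ k = exp (real k * (t - 2*t^2))" by (simp add: exp_of_nat_mult)
  also have "real k * (t - 2*t^2) = (y - real k) - 2*(y - real k)^2/real k"
    using kp by (simp add: t_def field_simps power2_eq_square)
  finally have pw: "exp ((y - real k) - 2*(y - real k)^2/real k) \<le> (y/real k)^k" using yk by simp
  have st: "fact k * exp (real k) \<le> exp 1 * real k ^ k * sqrt (real k)" by (rule stirling_upper[OF k])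
  have fpos: "(fact k::real) > 0" by simp
  define W where "W = 2*(y - real k)^2/real k"
  have "exp ((y - real k) - W) * exp (real k) * exp (-y) = exp (((y - real k) - W) + real k + (-y))"
    by (simp only: exp_add)
  also have "\<dots> = exp (-2*(y - real k)^2/real k)" by (simp add: W_def)
  finally have "exp (-2*(y - real k)^2/real k) / (exp 1 * sqrt (real k))
        = exp ((y - real k) - 2*(y - real k)^2/real k) * exp (real k) * exp (-y) / (exp 1 * sqrt (real k))"
    by (simp add: W_def)
  also have "\<dots> \<le> (y/real k)^k * exp (real k) * exp (-y) / (exp 1 * sqrt (real k))"
    using pw kp by (intro divide_right_mono mult_right_mono) auto
  also have "\<dots> = y^k * exp (-y) * exp (real k) / (exp 1 * real k ^ k * sqrt (real k))"
    using kp by (simp add: power_divide field_simps)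
  also have "\<dots> \<le> y^k * exp (-y) * exp (real k) / (fact k * exp (real k))"
    using st yp fpos kp by (intro divide_left_mono mult_pos_pos) auto
  also have "\<dots> = erlang_density k 1 y"
    using yp by (simp add: erlang_density_def)
  finally show ?thesis .
qed

lemma erlang_mgf:
  fixes s::real assumes s: "s < 1"
  shows "(\<integral>\<^sup>+x. ennreal (erlang_density k 1 x * exp (s*x)) \<partial>lborel) = ennreal ((1/(1-s))^Suc k)"
proof -
  have r: "0 < 1 - s" using s by simp
  have eq: "erlang_density k 1 x * exp (s*x) = (1/(1-s))^Suc k * erlang_density k (1-s) x" for x
  proof (cases "x < 0")
    case True then show ?thesis by (simp add: erlang_density_def)
  next
    case False
    have "exp (- x) * exp (s*x) = exp (- ((1-s)*x))" by (simp add: exp_add[symmetric] algebra_simps)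
    with False r show ?thesis
      by (simp add: erlang_density_def power_divide field_simps)
  qed
  have "(\<integral>\<^sup>+x. ennreal (erlang_density k 1 x * exp (s*x)) \<partial>lborel)
      = (\<integral>\<^sup>+x. ennreal ((1/(1-s))^Suc k) * ennreal (erlang_density k (1-s) x * x^0) \<partial>lborel)"
    using r by (intro nn_integral_cong) (simp add: eq ennreal_mult[symmetric])
  also have "\<dots> = ennreal ((1/(1-s))^Suc k) * (\<integral>\<^sup>+x. ennreal (erlang_density k (1-s) x * x^0) \<partial>lborel)"
    by (rule nn_integral_cmult) simp
  also have "(\<integral>\<^sup>+x. ennreal (erlang_density k (1-s) x * x^0) \<partial>lborel) = 1"
    using nn_integral_erlang_ith_moment[OF r, of k 0] by simp
  finally show ?thesis by simp
qed

lemma erlang_upper_tail: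
  fixes s t::real assumes s: "0 \<le> s" "s < 1"
  shows "emeasure (density lborel (erlang_density k 1)) {t..} \<le> ennreal (exp (-s*t) * (1/(1-s))^Suc k)"
proof -
  have "emeasure (density lborel (erlang_density k 1)) {t..}
       = (\<integral>\<^sup>+x. ennreal (erlang_density k 1 x) * indicator {t..} x \<partial>lborel)"
    by (simp add: emeasure_density)
  also have "\<dots> \<le> (\<integral>\<^sup>+x. ennreal (exp (-s*t)) * ennreal (erlang_density k 1 x * exp (s*x)) \<partial>lborel)"
  proof (intro nn_integral_mono)
    fix x::real
    show "ennreal (erlang_density k 1 x) * indicator {t..} x \<le> ennreal (exp (-s*t)) * ennreal (erlang_density k 1 x * exp (s*x))"
    proof (cases "t \<le> x")
      case True
      have "exp (-s*t) * exp (s*x) = exp (s*(x-t))" by (simp add: algebra_simps flip: exp_add)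
      moreover have "0 \<le> s*(x-t)" using True s by simp
      ultimately have "1 \<le> exp (-s*t) * exp (s*x)" by simp
      hence "erlang_density k 1 x * 1 \<le> erlang_density k 1 x * (exp (-s*t) * exp (s*x))"
        using erlang_density_nonneg[of 1 k x] by (intro mult_left_mono) auto
      hence "erlang_density k 1 x \<le> exp (-s*t) * (erlang_density k 1 x * exp (s*x))"
        by (simp add: algebra_simps)
      thus ?thesis using True by (simp add: ennreal_mult[symmetric] ennreal_leI)
    qed simp
  qed
  also have "\<dots> = ennreal (exp (-s*t)) * (\<integral>\<^sup>+x. ennreal (erlang_density k 1 x * exp (s*x)) \<partial>lborel)"
    by (rule nn_integral_cmult) simp
  also have "\<dots> = ennreal (exp (-s*t)) * ennreal ((1/(1-s))^Suc k)"
    unfolding erlang_mgf[OF s(2)] ..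
  also have "\<dots> = ennreal (exp (-s*t) * (1/(1-s))^Suc k)"
    using s by (intro ennreal_mult[symmetric]) auto
  finally show ?thesis .
qed

lemma erlang_lower_tail:
  fixes s t::real assumes s: "0 \<le> s"
  shows "emeasure (density lborel (erlang_density k 1)) {..t} \<le> ennreal (exp (s*t) * (1/(1+s))^Suc k)"
proof -
  have "emeasure (density lborel (erlang_density k 1)) {..t}
       = (\<integral>\<^sup>+x. ennreal (erlang_density k 1 x) * indicator {..t} x \<partial>lborel)"
    by (simp add: emeasure_density)
  also have "\<dots> \<le> (\<integral>\<^sup>+x. ennreal (exp (s*t)) * ennreal (erlang_density k 1 x * exp ((-s)*x)) \<partial>lborel)"
  proof (intro nn_integral_mono)
    fix x::real
    show "ennreal (erlang_density k 1 x) * indicator {..t} x \<le> ennreal (exp (s*t)) * ennreal (erlang_density k 1 x * exp ((-s)*x))"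
    proof (cases "x \<le> t")
      case True
      have "exp (s*t) * exp ((-s)*x) = exp (s*(t-x))" by (simp add: algebra_simps flip: exp_add)
      moreover have "0 \<le> s*(t-x)" using True s by simp
      ultimately have "1 \<le> exp (s*t) * exp ((-s)*x)" by simp
      hence "erlang_density k 1 x * 1 \<le> erlang_density k 1 x * (exp (s*t) * exp ((-s)*x))"
        using erlang_density_nonneg[of 1 k x] by (intro mult_left_mono) auto
      hence "erlang_density k 1 x \<le> exp (s*t) * (erlang_density k 1 x * exp ((-s)*x))"
        by (simp add: algebra_simps)
      thus ?thesis using True by (simp add: ennreal_mult[symmetric] ennreal_leI)
    qed simp
  qed
  also have "\<dots> = ennreal (exp (s*t)) * (\<integral>\<^sup>+x. ennreal (erlang_density k 1 x * exp ((-s)*x)) \<partial>lborel)"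
    by (rule nn_integral_cmult) simp
  also have m: "(\<integral>\<^sup>+x. ennreal (erlang_density k 1 x * exp ((-s)*x)) \<partial>lborel) = ennreal ((1/(1+s))^Suc k)"
    using erlang_mgf[of "-s" k] s by simp
  have "ennreal (exp (s*t)) * (\<integral>\<^sup>+x. ennreal (erlang_density k 1 x * exp ((-s)*x)) \<partial>lborel) = ennreal (exp (s*t)) * ennreal ((1/(1+s))^Suc k)"
    unfolding m ..
  also have "\<dots> = ennreal (exp (s*t) * (1/(1+s))^Suc k)"
    using s by (intro ennreal_mult[symmetric]) auto
  finally show ?thesis .
qed

lemma erlang_window:
  fixes a b m::real assumes "a \<le> b" "0 \<le> m" and dm: "\<And>x. a \<le> x \<Longrightarrow> x \<le> b \<Longrightarrow> m \<le> erlang_density k 1 x"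
  shows "ennreal ((b - a) * m) \<le> emeasure (density lborel (erlang_density k 1)) {a..b}"
proof -
  have "ennreal ((b - a) * m) = (\<integral>\<^sup>+x. ennreal m * indicator {a..b} x \<partial>lborel)"
    using assms by (simp add: nn_integral_cmult ennreal_mult mult.commute)
  also have "\<dots> \<le> (\<integral>\<^sup>+x. ennreal (erlang_density k 1 x) * indicator {a..b} x \<partial>lborel)"
    by (intro nn_integral_mono) (auto simp: dm ennreal_leI split: split_indicator)
  also have "\<dots> = emeasure (density lborel (erlang_density k 1)) {a..b}"
    by (simp add: emeasure_density)
  finally show ?thesis .
qed

lemma tail_factor_up:
  fixes uu t::real and n::nat assumes "0 \<le> uu" "uu \<le> 1/2"
  shows "exp (-uu*t) * (1/(1-uu))^n \<le> exp (-uu*t + real n*(uu + 2*uu^2))"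
proof -
  have "exp (-uu - 2*uu^2) \<le> 1 - uu" using exp_quad_le[of "-uu"] assms by simp
  hence "1/(1-uu) \<le> 1/exp (-uu - 2*uu^2)" using assms by (intro divide_left_mono) auto
  also have "\<dots> = exp (uu + 2*uu^2)"
  proof -
    have "exp (-uu - 2*uu^2) * exp (uu + 2*uu^2) = 1" by (simp flip: exp_add)
    thus ?thesis by (simp add: field_simps)
  qed
  finally have "(1/(1-uu))^n \<le> exp (uu + 2*uu^2)^n" using assms by (intro power_mono) auto
  also have "\<dots> = exp (real n*(uu + 2*uu^2))" by (simp add: exp_of_nat_mult)
  finally have p: "(1/(1-uu))^n \<le> exp (real n*(uu + 2*uu^2))" .
  have "exp (-uu*t) * (1/(1-uu))^n \<le> exp (-uu*t) * exp (real n*(uu + 2*uu^2))"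
    by (rule mult_left_mono[OF p]) simp
  thus ?thesis unfolding exp_add .
qed

lemma tail_factor_low:
  fixes uu t::real and n::nat assumes "0 \<le> uu"
  shows "exp (uu*t) * (1/(1+uu))^n \<le> exp (uu*t + real n*(-uu + 2*uu^2))"
proof -
  have "exp (uu - 2*uu^2) \<le> 1 + uu" using exp_quad_le[of "uu"] assms by simp
  hence "1/(1+uu) \<le> 1/exp (uu - 2*uu^2)" using assms by (intro divide_left_mono) auto
  also have "\<dots> = exp (-uu + 2*uu^2)"
  proof -
    have "exp (uu - 2*uu^2) * exp (-uu + 2*uu^2) = 1" by (simp flip: exp_add)
    thus ?thesis by (simp add: field_simps)
  qed
  finally have "(1/(1+uu))^n \<le> exp (-uu + 2*uu^2)^n" using assms by (intro power_mono) auto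
  also have "\<dots> = exp (real n*(-uu + 2*uu^2))" by (simp add: exp_of_nat_mult)
  finally have p: "(1/(1+uu))^n \<le> exp (real n*(-uu + 2*uu^2))" .
  have "exp (uu*t) * (1/(1+uu))^n \<le> exp (uu*t) * exp (real n*(-uu + 2*uu^2))"
    by (rule mult_left_mono[OF p]) simp
  thus ?thesis unfolding exp_add .
qed

lemma div_le_helper: fixes c l m::real assumes "0 < c" "0 \<le> l" "1 \<le> m*c" shows "l/c \<le> l*m"
proof -
  have "l*1 \<le> l*(m*c)" using assms by (intro mult_left_mono) auto
  thus ?thesis using assms by (simp add: pos_divide_le_eq mult.assoc)
qed

lemma le_div_helper: fixes c l m::real assumes "0 < c" "0 \<le> l" "m*c \<le> 1" shows "l*m \<le> l/c"
proof -
  have "l*(m*c) \<le> l*1" using assms by (intro mult_left_mono) auto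
  thus ?thesis using assms by (simp add: pos_le_divide_eq mult.assoc)
qed

lemma eps_aux: fixes e::real assumes "0<e" "e<1" shows "1 \<le> (1-e/2)*(1+e)" "(1+e/2)*(1-e) \<le> 1"
proof -
  have "(1-e/2)*(1+e) = 1 + e*(1-e)/2" "(1+e/2)*(1-e) = 1 - e*(1+e)/2" by (simp_all add: field_simps)
  moreover have "e*(1-e) \<ge> 0" "e*(1+e) \<ge> 0" using assms by simp_all
  ultimately show "1 \<le> (1-e/2)*(1+e)" "(1+e/2)*(1-e) \<le> 1" by linarith+
qed

definition Cc :: real where "Cc = 16 * exp 67"

lemma Cc_ge: "Cc \<ge> 64" "Cc \<ge> 2 * exp 1"
proof -
  have "exp (67::real) \<ge> 1 + 67" by (rule exp_ge_add_one_self)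
  thus "Cc \<ge> 64" by (simp add: Cc_def)
  have "exp (1::real) \<le> exp 67" by simp
  moreover have "exp (67::real) > 0" by simp
  ultimately show "Cc \<ge> 2 * exp 1" unfolding Cc_def by linarith
qed

lemma core:
  fixes k::nat and \<epsilon> \<delta>::real
  assumes e: "0 < \<epsilon>" "\<epsilon> < 1" and d: "0 < \<delta>" "\<delta> < 1"
    and hyp: "ln (1/\<delta>) \<le> real (Suc k) * \<epsilon>^2 / Cc"
  shows "1 - \<delta> \<le> measure (density lborel (erlang_density k 1)) {real (Suc k)/(1+\<epsilon>) .. real (Suc k)/(1-\<epsilon>)}"
proof -
  define D where "D = density lborel (erlang_density k 1)"
  interpret D: prob_space D unfolding D_def by (rule prob_space_erlang_density) simp
  define l where "l = real (Suc k)"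
  have l1: "l \<ge> 1" by (simp add: l_def)
  define \<alpha> where "\<alpha> = l/(1+\<epsilon>)"
  define \<beta> where "\<beta> = l/(1-\<epsilon>)"
  have hyp': "ln (1/\<delta>) \<le> l * \<epsilon>^2 / Cc" using hyp by (simp add: l_def)
  have emD: "emeasure D A = ennreal (measure D A)" for A by (simp add: D.emeasure_eq_measure)
  have Cpos: "Cc > 0" using Cc_ge by simp
  have lnd: "1 - \<delta> \<le> ln (1/\<delta>)"
    using ln_le_minus_one[of \<delta>] d by (simp add: ln_div)
  show ?thesis
  proof (cases "l * \<epsilon>^2 \<ge> 64")
    case True
    define a where "a = \<epsilon>/2"
    define uu where "uu = a/4"
    have a: "0 < a" "a < 1/2" using e by (auto simp: a_def)
    have uu: "0 \<le> uu" "uu \<le> 1/2" "uu < 1" using a by (auto simp: uu_def)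
    have expo: "-uu*(l*(1+a)) + l*(uu + 2*uu^2) = - (l*\<epsilon>^2/32)"
      by (simp add: uu_def a_def power2_eq_square field_simps)
    have expo2: "uu*(l*(1-a)) + l*(-uu + 2*uu^2) = - (l*\<epsilon>^2/32)"
      by (simp add: uu_def a_def power2_eq_square field_simps)
    have up: "measure D {l*(1+a)..} \<le> exp (- (l*\<epsilon>^2/32))"
    proof -
      have "emeasure D {l*(1+a)..} \<le> ennreal (exp (-uu*(l*(1+a))) * (1/(1-uu))^Suc k)"
        unfolding D_def by (rule erlang_upper_tail) (use uu in auto)
      also have "exp (-uu*(l*(1+a))) * (1/(1-uu))^Suc k \<le> exp (-uu*(l*(1+a)) + real (Suc k)*(uu + 2*uu^2))"
        by (rule tail_factor_up) (use uu in auto)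
      finally have "emeasure D {l*(1+a)..} \<le> ennreal (exp (-uu*(l*(1+a)) + real (Suc k)*(uu + 2*uu^2)))"
        by (simp add: ennreal_leI order_trans)
      hence "measure D {l*(1+a)..} \<le> exp (-uu*(l*(1+a)) + real (Suc k)*(uu + 2*uu^2))"
        unfolding emD by (simp add: ennreal_le_iff)
      thus ?thesis using expo by (simp add: l_def)
    qed
    have lo: "measure D {..l*(1-a)} \<le> exp (- (l*\<epsilon>^2/32))"
    proof -
      have "emeasure D {..l*(1-a)} \<le> ennreal (exp (uu*(l*(1-a))) * (1/(1+uu))^Suc k)"
        unfolding D_def by (rule erlang_lower_tail) (use uu in auto)
      also have "exp (uu*(l*(1-a))) * (1/(1+uu))^Suc k \<le> exp (uu*(l*(1-a)) + real (Suc k)*(-uu + 2*uu^2))"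
        by (rule tail_factor_low) (use uu in auto)
      finally have "emeasure D {..l*(1-a)} \<le> ennreal (exp (uu*(l*(1-a)) + real (Suc k)*(-uu + 2*uu^2)))"
        by (simp add: ennreal_leI order_trans)
      hence "measure D {..l*(1-a)} \<le> exp (uu*(l*(1-a)) + real (Suc k)*(-uu + 2*uu^2))"
        unfolding emD by (simp add: ennreal_le_iff)
      thus ?thesis using expo2 by (simp add: l_def)
    qed
    have win: "{l*(1-a)<..<l*(1+a)} \<subseteq> {\<alpha>..\<beta>}"
    proof
      fix x assume x: "x \<in> {l*(1-a)<..<l*(1+a)}"
      have "\<alpha> \<le> l*(1-a)"
        unfolding \<alpha>_def a_def using e l1 eps_aux(1)[OF e] by (intro div_le_helper) auto
      moreover have "l*(1+a) \<le> \<beta>"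
        unfolding \<beta>_def a_def using e l1 eps_aux(2)[OF e] by (intro le_div_helper) auto
      ultimately show "x \<in> {\<alpha>..\<beta>}" using x by auto
    qed
    have sD: "sets D = sets borel" by (simp add: D_def)
    have spD: "space D = UNIV" by (simp add: D_def)
    have U: "{..l*(1-a)} \<union> {l*(1-a)<..<l*(1+a)} \<union> {l*(1+a)..} = UNIV" by auto
    have "1 = measure D ({..l*(1-a)} \<union> {l*(1-a)<..<l*(1+a)} \<union> {l*(1+a)..})"
      unfolding U using D.prob_space spD by simp
    also have "\<dots> \<le> measure D ({..l*(1-a)} \<union> {l*(1-a)<..<l*(1+a)}) + measure D {l*(1+a)..}"
      by (rule measure_Un_le) (simp_all add: sD)
    also have "measure D ({..l*(1-a)} \<union> {l*(1-a)<..<l*(1+a)}) \<le> measure D {..l*(1-a)} + measure D {l*(1-a)<..<l*(1+a)}"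
      by (rule measure_Un_le) (simp_all add: sD)
    finally have s3: "1 \<le> measure D {..l*(1-a)} + measure D {l*(1-a)<..<l*(1+a)} + measure D {l*(1+a)..}"
      by linarith
    have wm: "measure D {l*(1-a)<..<l*(1+a)} \<le> measure D {\<alpha>..\<beta>}"
      by (rule D.finite_measure_mono[OF win]) (simp add: sD)
    have m: "1 - 2 * exp (- (l*\<epsilon>^2/32)) \<le> measure D {\<alpha>..\<beta>}" using s3 wm up lo by linarith
    have "2 * exp (- (l*\<epsilon>^2/32)) = exp (ln 2 + - (l*\<epsilon>^2/32))" by (subst exp_add) simp
    also have "\<dots> \<le> exp (- ln (1/\<delta>))"
    proof -
      have "ln (2::real) \<le> 1" using ln_le_minus_one[of 2] by simp
      moreover have "ln (1/\<delta>) \<le> l*\<epsilon>^2/64"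
      proof -
        have "l*\<epsilon>^2/Cc \<le> l*\<epsilon>^2/64" using Cc_ge l1 by (intro divide_left_mono) auto
        thus ?thesis using hyp' by linarith
      qed
      ultimately have "ln 2 + - (l*\<epsilon>^2/32) \<le> - ln (1/\<delta>)" using True by linarith
      thus ?thesis by (simp only: exp_le_cancel_iff)
    qed
    also have "- ln (1/\<delta>) = ln \<delta>" using d by (simp add: ln_div)
    also have "exp (ln \<delta>) = \<delta>" using d by simp
    finally have "1 - \<delta> \<le> measure D {\<alpha>..\<beta>}" using m by linarith
    thus ?thesis unfolding D_def \<alpha>_def \<beta>_def l_def .
  next
    case False
    hence small: "l * \<epsilon>^2 < 64" by simp
    define r where "r = \<epsilon> * sqrt l"
    have r2: "r^2 = l*\<epsilon>^2" using l1 by (simp add: r_def power_mult_distrib)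
    have r0: "r > 0" using e l1 by (simp add: r_def)
    have r8: "r < 8"
    proof (rule ccontr)
      assume "\<not> r < 8" hence "8^2 \<le> r^2" by (intro power_mono) auto
      thus False using small r2 by simp
    qed
    have "1 - \<delta> \<le> l*\<epsilon>^2/Cc" using lnd hyp' by linarith
    also have "\<dots> \<le> 8*r/Cc"
    proof -
      have "r*r \<le> 8*r" using r8 r0 by (intro mult_right_mono) auto
      hence "l*\<epsilon>^2 \<le> 8*r" using r2 by (simp add: power2_eq_square)
      thus ?thesis using Cc_ge by (intro divide_right_mono) auto
    qed
    finally have goal1: "1 - \<delta> \<le> 8*r/Cc" .
    show ?thesis
    proof (cases "k = 0")
      case True
      hence l1': "l = 1" by (simp add: l_def)
      have "ennreal ((1 - (1 - \<epsilon>/2)) * exp (-1)) \<le> emeasure D {1 - \<epsilon>/2 .. 1}"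
        unfolding D_def
      proof (rule erlang_window)
        fix x::real assume x: "1 - \<epsilon>/2 \<le> x" "x \<le> 1"
        hence "x \<ge> 0" using e by simp
        thus "exp (-1) \<le> erlang_density k 1 x" using True x by (simp add: erlang_density_def)
      qed (use e in auto)
      hence "(\<epsilon>/2) * exp (-1) \<le> measure D {1 - \<epsilon>/2 .. 1}"
        unfolding emD using e by (simp add: ennreal_le_iff)
      also have "\<dots> \<le> measure D {\<alpha>..\<beta>}"
      proof (rule D.finite_measure_mono)
        have "\<alpha> \<le> 1 * (1 - \<epsilon>/2)"
          unfolding \<alpha>_def l1' using e eps_aux(1)[OF e] by (intro div_le_helper) auto
        moreover have "1 \<le> \<beta>" using e unfolding \<beta>_def l1' by simp
        ultimately show "{1 - \<epsilon>/2 .. 1} \<subseteq> {\<alpha>..\<beta>}" by auto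
      qed (simp add: D_def)
      finally have g: "(\<epsilon>/2) * exp (-1) \<le> measure D {\<alpha>..\<beta>}" .
      have "8*r/Cc \<le> (\<epsilon>/2) * exp (-1)"
      proof -
        have r: "r = \<epsilon>" using l1' by (simp add: r_def)
        have "8*\<epsilon>/Cc \<le> 8*\<epsilon>/(16 * exp 67)" by (simp add: Cc_def)
        also have "\<dots> = (\<epsilon>/2) * exp (-67)" by (simp add: exp_minus field_simps)
        also have "\<dots> \<le> (\<epsilon>/2) * exp (-1)" using e by (intro mult_left_mono) auto
        finally show ?thesis using r by simp
      qed
      thus ?thesis using goal1 g by (simp add: D_def \<alpha>_def \<beta>_def l_def)
    next
      case False
      hence k1: "k \<ge> 1" by simp
      have kl: "real k = l - 1" by (simp add: l_def)
      define h where "h = \<epsilon> * l / 2"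
      have h0: "0 \<le> h" "h \<le> l/2" using e l1 by (auto simp: h_def)
      have h2: "h^2 < 16 * l"
      proof -
        have "h^2 = (l*\<epsilon>^2) * l / 4" by (simp add: h_def power2_eq_square)
        also have "\<dots> < 64 * l / 4" using small l1 by (intro divide_strict_right_mono mult_strict_right_mono) auto
        finally show ?thesis by simp
      qed
      have dens: "exp (-67) / sqrt l \<le> erlang_density k 1 y" if y: "l - h \<le> y" "y \<le> l" for y
      proof -
        have yk: "y \<ge> real k / 2" using y h0 kl by simp
        have dk: "(y - real k)^2 \<le> 33 * real k"
        proof -
          have "(y - real k)^2 \<le> 1 + h^2"
          proof -
            define z where "z = y - real k"
            have z: "z \<le> 1" "1 - h \<le> z" using y kl by (auto simp: z_def)
            have "z^2 \<le> 1 + h^2"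
            proof (cases "z \<ge> 0")
              case True
              hence "z*z \<le> 1*1" using z by (intro mult_mono) auto
              thus ?thesis by (simp add: power2_eq_square) (smt (verit) zero_le_power2 power2_eq_square)
            next
              case False
              hence "(-z)^2 \<le> h^2" using z by (intro power_mono) auto
              thus ?thesis by simp
            qed
            thus ?thesis by (simp add: z_def)
          qed
          thus ?thesis using h2 kl k1 by simp
        qed
        have kpos: "real k > 0" using k1 by simp
        have "-66 \<le> -2*(y - real k)^2/real k"
          using dk kpos by (simp add: field_simps)
        hence "exp (-66) \<le> exp (-2*(y - real k)^2/real k)" by simp
        hence "exp (-66) / (exp 1 * sqrt (real k)) \<le> exp (-2*(y - real k)^2/real k) / (exp 1 * sqrt (real k))"
          using kpos by (intro divide_right_mono) auto
        also have "\<dots> \<le> erlang_density k 1 y" by (rule dens_lb[OF k1 yk])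
        finally have a1: "exp (-66) / (exp 1 * sqrt (real k)) \<le> erlang_density k 1 y" .
        have "exp (-67) / sqrt l \<le> exp (-67) / sqrt (real k)"
          using kpos kl by (intro divide_left_mono) auto
        also have "\<dots> = exp (-66) / (exp 1 * sqrt (real k))" 
        proof -
          have "exp (-66::real) = exp (-67) * exp 1" by (simp flip: exp_add)
          thus ?thesis by simp
        qed
        finally show ?thesis using a1 by simp
      qed
      have "ennreal ((l - (l - h)) * (exp (-67) / sqrt l)) \<le> emeasure D {l - h .. l}"
        unfolding D_def by (rule erlang_window) (use h0 dens in auto)
      hence "h * (exp (-67) / sqrt l) \<le> measure D {l - h .. l}"
        unfolding emD using h0 l1 by (simp add: ennreal_le_iff)
      also have "\<dots> \<le> measure D {\<alpha>..\<beta>}"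
      proof (rule D.finite_measure_mono)
        have "\<alpha> \<le> l * (1 - \<epsilon>/2)"
          unfolding \<alpha>_def using e l1 eps_aux(1)[OF e] by (intro div_le_helper) auto
        also have "l * (1 - \<epsilon>/2) = l - h" by (simp add: h_def algebra_simps)
        finally have "\<alpha> \<le> l - h" .
        moreover have "l \<le> \<beta>" using e l1 unfolding \<beta>_def by (simp add: field_simps)
        ultimately show "{l - h .. l} \<subseteq> {\<alpha>..\<beta>}" by auto
      qed (simp add: D_def)
      finally have g: "h * (exp (-67) / sqrt l) \<le> measure D {\<alpha>..\<beta>}" .
      have "h * (exp (-67) / sqrt l) = r * exp (-67) / 2"
      proof -
        have lsq: "sqrt l * sqrt l = l" using l1 by simp
        have sl: "sqrt l > 0" using l1 by simp
        have "h * (exp (-67) / sqrt l) = (\<epsilon> * (sqrt l * sqrt l) / 2) * (exp (-67) / sqrt l)"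
          by (simp only: h_def lsq)
        also have "\<dots> = \<epsilon> * sqrt l * exp (-67) / 2" using sl by (simp add: field_simps)
        finally show ?thesis by (simp add: r_def)
      qed
      also have "r * exp (-67) / 2 = 8*r/Cc" by (simp add: Cc_def exp_minus field_simps)
      finally show ?thesis using goal1 g by (simp add: D_def \<alpha>_def \<beta>_def l_def)
    qed
  qed
qed

lemma walk_len_nonneg: "is_walk E p \<Longrightarrow> (\<forall>e\<in>E. L e \<ge> 0) \<Longrightarrow> walk_len L p \<ge> 0"
  by (induction E p rule: is_walk.induct) auto

lemma walk_last_V: "ugraph V E \<Longrightarrow> is_walk E p \<Longrightarrow> hd p \<in> V \<Longrightarrow> last p \<in> V"
proof (induction E p rule: is_walk.induct)
  case (3 E u w ws)
  have "{u,w} \<subseteq> V" using 3 by (auto simp: ugraph_def)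
  thus ?case using 3 by auto
qed auto

lemma walk_first_step:
  assumes "is_walk E p" "hd p = v" "last p = u" "u \<noteq> v"
  obtains w ws where "p = v # w # ws" "{v,w} \<in> E" "is_walk E (w # ws)"
proof -
  obtain x xs where p: "p = x # xs" using assms by (cases p) auto
  obtain w ws where "xs = w # ws" using assms p by (cases xs) auto
  thus ?thesis using that assms p by auto
qed

lemma Nv_finite: "ugraph V E \<Longrightarrow> finite E"
  unfolding ugraph_def by (meson Pow_iff finite_Pow_iff finite_subset subsetI)

lemma degree_card: assumes "ugraph V E" shows "degree E v = card {e\<in>E. v \<in> e}"
proof -
  have "{e\<in>E. v \<in> e} = (\<lambda>u. {v,u}) ` {u. {v,u} \<in> E}"
  proof
    show "{e\<in>E. v \<in> e} \<subseteq> (\<lambda>u. {v,u}) ` {u. {v,u} \<in> E}"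
    proof
      fix e assume e: "e \<in> {e\<in>E. v \<in> e}"
      then have "card e = 2" using assms by (auto simp: ugraph_def)
      then obtain x y where xy: "e = {x,y}" "x \<noteq> y" by (auto simp: card_2_iff)
      show "e \<in> (\<lambda>u. {v,u}) ` {u. {v,u} \<in> E}"
      proof (cases "v = x")
        case True thus ?thesis using e xy by auto
      next
        case False hence "v = y" using e xy by auto
        hence "e = {v,x}" using xy by auto
        thus ?thesis using e by auto
      qed
    qed
  qed auto
  moreover have "inj_on (\<lambda>u. {v,u}) {u. {v,u} \<in> E}"
    by (auto simp: inj_on_def doubleton_eq_iff)
  ultimately show ?thesis unfolding degree_def by (simp add: card_image)
qed

lemma second_gap_eq:
  assumes G: "ugraph V E" and vV: "v \<in> V" and Nne: "{e\<in>E. v \<in> e} \<noteq> {}"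
    and L: "\<forall>e\<in>E. L e \<ge> 0"
  shows "second_gap E L v = Min ((\<lambda>e. L e) ` {e\<in>E. v \<in> e})"
proof -
  define Nv where "Nv = {e\<in>E. v \<in> e}"
  define m where "m = Min ((\<lambda>e. L e) ` Nv)"
  have finE: "finite E" using Nv_finite[OF G] .
  have finN: "finite Nv" using finE by (simp add: Nv_def)
  have Nne': "Nv \<noteq> {}" using Nne by (simp add: Nv_def)
  define W where "W = (\<lambda>u. {walk_len L p |p. is_walk E p \<and> hd p = v \<and> last p = u})"
  have it: "infection_time E L v u = Inf (W u)" for u by (simp add: infection_time_def W_def)
  have bdd: "bdd_below (W u)" for u
    unfolding W_def by (rule bdd_belowI[of _ 0]) (use walk_len_nonneg L in auto)
  have vv: "infection_time E L v v = 0"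
    unfolding it
  proof (rule cInf_eq_minimum)
    show "0 \<in> W v" unfolding W_def by (rule CollectI, rule exI[of _ "[v]"]) simp
    show "\<And>x. x \<in> W v \<Longrightarrow> 0 \<le> x" unfolding W_def using walk_len_nonneg L by auto
  qed
  define R where "R = {u. u \<noteq> v \<and> reachable E v u}"
  have finR: "finite R"
  proof (rule finite_subset)
    show "R \<subseteq> V"
      using walk_last_V[OF G] vV unfolding R_def reachable_def by fastforce
    show "finite V" using G by (simp add: ugraph_def)
  qed
  have lower: "m \<le> infection_time E L v u" if u: "u \<in> R" for u
    unfolding it
  proof (rule cInf_greatest)
    obtain p where "is_walk E p" "hd p = v" "last p = u" using u by (auto simp: R_def reachable_def)
    thus "W u \<noteq> {}" unfolding W_def by auto
    fix x assume "x \<in> W u"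
    then obtain p where p: "is_walk E p" "hd p = v" "last p = u" "x = walk_len L p" unfolding W_def by auto
    have "u \<noteq> v" using u by (simp add: R_def)
    then obtain w ws where pw: "p = v # w # ws" "{v,w} \<in> E" "is_walk E (w # ws)"
      using walk_first_step[OF p(1-3)] by blast
    have "m \<le> L {v,w}" unfolding m_def using finN pw by (intro Min_le) (auto simp: Nv_def)
    also have "L {v,w} \<le> L {v,w} + walk_len L (w # ws)" using walk_len_nonneg[OF pw(3)] L by simp
    finally show "m \<le> x" using p pw by simp
  qed
  have "m \<in> (\<lambda>e. L e) ` Nv" unfolding m_def using finN Nne' by (intro Min_in) auto
  then obtain e0 where e0: "e0 \<in> Nv" "L e0 = m" by auto
  then have "card e0 = 2" using G by (auto simp: ugraph_def Nv_def)
  then obtain x y where xy: "e0 = {x,y}" "x \<noteq> y" by (auto simp: card_2_iff)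
  obtain u0 where u0: "e0 = {v,u0}" "u0 \<noteq> v"
  proof (cases "v = x")
    case True thus ?thesis using that xy by auto
  next
    case False hence "v = y" using e0 xy by (auto simp: Nv_def)
    thus ?thesis using that xy by auto
  qed
  have walk0: "is_walk E [v,u0]" using e0 u0 by (simp add: Nv_def)
  have u0R: "u0 \<in> R" unfolding R_def reachable_def using walk0 u0 by (intro CollectI conjI exI[of _ "[v,u0]"]) auto
  have "infection_time E L v u0 \<le> m"
    unfolding it
  proof (rule cInf_lower[OF _ bdd])
    show "m \<in> W u0" unfolding W_def using walk0 e0 u0 by (intro CollectI exI[of _ "[v,u0]"]) auto
  qed
  hence u0m: "infection_time E L v u0 = m" using lower[OF u0R] by simp
  have "Min ((\<lambda>u. infection_time E L v u) ` R) = m"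
  proof (rule Min_eqI)
    show "finite ((\<lambda>u. infection_time E L v u) ` R)" using finR by simp
    show "\<And>y. y \<in> (\<lambda>u. infection_time E L v u) ` R \<Longrightarrow> m \<le> y" using lower by auto
    show "m \<in> (\<lambda>u. infection_time E L v u) ` R" using u0R u0m by force
  qed
  thus ?thesis unfolding second_gap_def vv R_def m_def Nv_def by simp
qed

lemma indep_coords:
  assumes fin: "finite I" and ne: "I \<noteq> {}" and N: "\<And>i. i \<in> I \<Longrightarrow> prob_space (N i)"
  shows "prob_space.indep_vars (PiM I N) N (\<lambda>i \<omega>. \<omega> i) I"
proof -
  interpret P: prob_space "PiM I N" by (rule prob_space_PiM) (rule N)
  show ?thesis
  proof (subst P.indep_vars_iff_distr_eq_PiM'[OF ne])
    show "\<And>i. i \<in> I \<Longrightarrow> (\<lambda>\<omega>. \<omega> i) \<in> measurable (PiM I N) (N i)"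
      by (rule measurable_component_singleton)
    have "distr (PiM I N) (PiM I N) (\<lambda>x. \<lambda>i\<in>I. x i) = distr (PiM I N) (PiM I N) (\<lambda>x. x)"
      by (rule distr_cong) (auto simp: space_PiM PiE_def extensional_restrict)
    also have "\<dots> = PiM I N" by (rule distr_id)
    also have "\<dots> = PiM I (\<lambda>i. distr (PiM I N) (N i) (\<lambda>\<omega>. \<omega> i))"
      by (rule PiM_cong) (auto simp: distr_PiM_component N)
    finally show "distr (PiM I N) (PiM I N) (\<lambda>x. \<lambda>i\<in>I. x i) = PiM I (\<lambda>i. distr (PiM I N) (N i) (\<lambda>\<omega>. \<omega> i))" .
  qed
qed

lemma distributed_coord:
  assumes N: "\<And>i. i \<in> I \<Longrightarrow> prob_space (N i)" and i: "i \<in> I"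
    and D: "distributed (N i) lborel X f"
  shows "distributed (PiM I N) lborel (\<lambda>\<omega>. X (\<omega> i)) f"
proof -
  have Xm: "X \<in> measurable (N i) lborel" using D by (simp add: distributed_def)
  have cm: "(\<lambda>\<omega>. \<omega> i) \<in> measurable (PiM I N) (N i)" using i by (rule measurable_component_singleton)
  have "distr (PiM I N) lborel (\<lambda>\<omega>. X (\<omega> i)) = distr (distr (PiM I N) (N i) (\<lambda>\<omega>. \<omega> i)) lborel X"
    using Xm cm by (simp add: distr_distr comp_def)
  also have "\<dots> = distr (N i) lborel X" by (simp add: distr_PiM_component N i)
  also have "\<dots> = density lborel f" using D by (simp add: distributed_def)
  moreover have "(\<lambda>\<omega>. X (\<omega> i)) \<in> measurable (PiM I N) lborel"
    using measurable_comp[OF cm Xm] by (simp add: comp_def)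
  ultimately show ?thesis using D by (simp add: distributed_def)
qed

lemma coord_borel:
  assumes "e \<in> E"
  shows "(\<lambda>L. L e) \<in> borel_measurable (PiM E (\<lambda>e. density lborel f))"
proof -
  have "(\<lambda>L. L e) \<in> measurable (PiM E (\<lambda>e. density lborel f)) (density lborel f)"
    using measurable_component_singleton[OF assms, of "\<lambda>e. density lborel f"] by simp
  moreover have "measurable (PiM E (\<lambda>e. density lborel f)) (density lborel f) = borel_measurable (PiM E (\<lambda>e. density lborel f))"
    by (rule measurable_cong_sets) simp_all
  ultimately show ?thesis by simp
qed

lemma walk_len_meas:
  "is_walk E p \<Longrightarrow> (\<lambda>L. walk_len L p) \<in> borel_measurable (PiM E (\<lambda>e. density lborel f))"
proof (induction E p rule: is_walk.induct)
  case (3 E u w ws)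
  hence "(\<lambda>L. L {u,w}) \<in> borel_measurable (PiM E (\<lambda>e. density lborel f))" by (intro coord_borel) simp
  moreover have "(\<lambda>L. walk_len L (w # ws)) \<in> borel_measurable (PiM E (\<lambda>e. density lborel f))" using 3 by simp
  ultimately show ?case by simp
qed auto

lemma infection_time_meas:
  "(\<lambda>L. infection_time E L v u) \<in> borel_measurable (PiM E (\<lambda>e. density lborel f))"
proof -
  let ?W = "{p. is_walk E p \<and> hd p = v \<and> last p = u}"
  have eq: "(\<lambda>L. infection_time E L v u) = (\<lambda>L. INF p\<in>?W. walk_len L p)"
  proof
    fix L
    have "{walk_len L p |p. is_walk E p \<and> hd p = v \<and> last p = u} = (\<lambda>p. walk_len L p) ` ?W" by blast
    thus "infection_time E L v u = (INF p\<in>?W. walk_len L p)" by (simp add: infection_time_def)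
  qed
  have "(\<lambda>L. INF p\<in>?W. walk_len L p) \<in> borel_measurable (PiM E (\<lambda>e. density lborel f))"
    by (rule borel_measurable_cINF_real) (auto intro: walk_len_meas)
  thus ?thesis unfolding eq .
qed

lemma second_gap_meas:
  assumes "ugraph V E" "v \<in> V"
  shows "(\<lambda>L. second_gap E L v) \<in> borel_measurable (PiM E (\<lambda>e. density lborel f))"
proof -
  define R where "R = {u. u \<noteq> v \<and> reachable E v u}"
  have finR: "finite R"
  proof (rule finite_subset)
    show "R \<subseteq> V"
      using walk_last_V[OF assms(1)] assms(2) unfolding R_def reachable_def by fastforce
    show "finite V" using assms by (simp add: ugraph_def)
  qed
  have "(\<lambda>L. Min ((\<lambda>u. infection_time E L v u) ` R) - infection_time E L v v) \<in> borel_measurable (PiM E (\<lambda>e. density lborel f))"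
    using finR by (intro borel_measurable_diff borel_measurable_Min infection_time_meas)
  thus ?thesis by (simp add: second_gap_def R_def)
qed

lemma exp_dist_id:
  assumes "0 < lam"
  shows "distributed (density lborel (exponential_density lam)) lborel (\<lambda>x. x) (exponential_density lam)"
  unfolding distributed_def
proof (intro conjI)
  show "distr (density lborel (exponential_density lam)) lborel (\<lambda>x. x) = density lborel (\<lambda>x. ennreal (exponential_density lam x))"
    by (rule distr_id2) simp
  show "(\<lambda>x. ennreal (exponential_density lam x)) \<in> borel_measurable lborel" by simp
  show "(\<lambda>x. x) \<in> measurable (density lborel (exponential_density lam)) lborel"
    by (rule measurable_ident_sets) simp
qed

lemma trace_dist:
  assumes G: "ugraph V E" and vV: "v \<in> V" and d: "degree E v \<ge> 1" and lam: "lam > 0"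
  shows "distributed (PiM E (\<lambda>e. density lborel (exponential_density lam))) lborel
           (\<lambda>L. second_gap E L v) (exponential_density (real (degree E v) * lam))"
proof -
  define D1 where "D1 = density lborel (exponential_density lam)"
  define P where "P = PiM E (\<lambda>e. D1)"
  define Nv where "Nv = {e\<in>E. v \<in> e}"
  have finE: "finite E" using Nv_finite[OF G] .
  have cardN: "card Nv = degree E v" using degree_card[OF G] by (simp add: Nv_def)
  have finN: "finite Nv" using finE by (simp add: Nv_def)
  have Nne: "Nv \<noteq> {}" using cardN d by auto
  have NE: "Nv \<subseteq> E" by (auto simp: Nv_def)
  have Ene: "E \<noteq> {}" using Nne NE by auto
  have pD1: "prob_space D1" unfolding D1_def by (rule prob_space_exponential_density[OF lam])
  interpret P: prob_space P unfolding P_def by (rule prob_space_PiM) (rule pD1)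
  have ind0: "P.indep_vars (\<lambda>e. D1) (\<lambda>e L. L e) E"
    unfolding P_def by (rule indep_coords[OF finE Ene pD1])
  have ind1: "P.indep_vars (\<lambda>e. borel) (\<lambda>e L. (\<lambda>x. x) (L e)) E"
    by (rule P.indep_vars_compose2[OF ind0]) (rule measurable_ident_sets, simp add: D1_def)
  have ind: "P.indep_vars (\<lambda>e. borel) (\<lambda>e L. L e) Nv"
    using P.indep_vars_subset[OF ind1 NE] by simp
  have coords: "distributed P lborel (\<lambda>L. L e) (exponential_density lam)" if "e \<in> Nv" for e
    unfolding P_def using distributed_coord[of E "\<lambda>e. D1" e "\<lambda>x. x", OF pD1] that NE exp_dist_id[OF lam]
    by (auto simp: D1_def)
  have mind: "distributed P lborel (\<lambda>L. Min ((\<lambda>e. L e) ` Nv)) (exponential_density (\<Sum>e\<in>Nv. lam))"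
    by (rule P.exponential_distributed_Min[OF finN Nne _ coords ind]) (use lam in auto)
  have sumeq: "(\<Sum>e\<in>Nv. lam) = real (degree E v) * lam" using cardN by simp
  have AEpos: "AE L in P. \<forall>e\<in>E. L e \<ge> 0"
  proof (rule AE_finite_allI[OF finE])
    fix e assume e: "e \<in> E"
    have "AE x in D1. 0 \<le> x"
      unfolding D1_def
      by (subst AE_density) (auto simp: erlang_density_def intro!: AE_I2)
    thus "AE L in P. 0 \<le> L e"
      unfolding P_def by (rule AE_PiM_component[OF pD1 e])
  qed
  have AEeq: "AE L in P. second_gap E L v = Min ((\<lambda>e. L e) ` Nv)"
    using AEpos by eventually_elim (use second_gap_eq[OF G vV] Nne in \<open>auto simp: Nv_def\<close>)
  have sgm: "(\<lambda>L. second_gap E L v) \<in> borel_measurable P"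
    unfolding P_def D1_def by (rule second_gap_meas[OF G vV])
  have minm: "(\<lambda>L. Min ((\<lambda>e. L e) ` Nv)) \<in> borel_measurable P"
    using mind by (simp add: distributed_def)
  have "distr P lborel (\<lambda>L. second_gap E L v) = distr P lborel (\<lambda>L. Min ((\<lambda>e. L e) ` Nv))"
    by (rule distr_cong_AE[OF refl refl AEeq]) (use sgm minm in simp_all)
  hence "distributed P lborel (\<lambda>L. second_gap E L v) (exponential_density (\<Sum>e\<in>Nv. lam))"
    using mind sgm by (simp add: distributed_def)
  thus ?thesis unfolding sumeq P_def D1_def .
qed

lemma est_iff:
  fixes S lam \<epsilon> l d :: real
  assumes d: "d > 0" and lam: "lam > 0" and l: "l > 0" and e: "0 < \<epsilon>" "\<epsilon> < 1"
  shows "(\<bar>l/(S*lam) - d\<bar> \<le> \<epsilon>*d) \<longleftrightarrow> (d*lam*S \<in> {l/(1+\<epsilon>) .. l/(1-\<epsilon>)})"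
proof (cases "S > 0")
  case True
  define Z where "Z = d*lam*S"
  have Z: "Z > 0" using True d lam by (simp add: Z_def)
  have eq: "l/(S*lam) - d = d * (l/Z - 1)" using True d lam by (simp add: Z_def field_simps)
  have "(\<bar>l/(S*lam) - d\<bar> \<le> \<epsilon>*d) \<longleftrightarrow> d * \<bar>l/Z - 1\<bar> \<le> d * \<epsilon>"
    unfolding eq using d by (simp add: abs_mult mult.commute)
  also have "\<dots> \<longleftrightarrow> \<bar>l/Z - 1\<bar> \<le> \<epsilon>" using d by simp
  also have "\<dots> \<longleftrightarrow> (1-\<epsilon>) \<le> l/Z \<and> l/Z \<le> 1+\<epsilon>" by linarith
  also have "(1-\<epsilon>) \<le> l/Z \<longleftrightarrow> Z \<le> l/(1-\<epsilon>)"
    using Z e by (simp add: pos_le_divide_eq pos_divide_le_eq mult.commute)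
  also have "l/Z \<le> 1+\<epsilon> \<longleftrightarrow> l/(1+\<epsilon>) \<le> Z"
    using Z e by (simp add: pos_le_divide_eq pos_divide_le_eq mult.commute)
  finally show ?thesis by (auto simp: Z_def)
next
  case False
  have "l/(S*lam) \<le> 0" using False l lam
    by (intro divide_nonneg_nonpos) (auto simp: mult_nonpos_nonneg)
  hence lhs: "\<not> (\<bar>l/(S*lam) - d\<bar> \<le> \<epsilon>*d)" using d e
    by (smt (verit) mult_less_cancel_right2)
  have "d*lam*S \<le> 0" using False d lam by (simp add: mult_nonneg_nonpos)
  moreover have "l/(1+\<epsilon>) > 0" using l e by simp
  ultimately have "\<not> (d*lam*S \<in> {l/(1+\<epsilon>) .. l/(1-\<epsilon>)})" by auto
  thus ?thesis using lhs by simp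
qed

theorem theorem2:
  shows "\<exists>C::real. C > 0 \<and>
    (\<forall>(V::nat set) (E::nat set set) (v::nat) (\<epsilon>::real) (\<delta>::real) (lam::real) (l::nat).
       ugraph V E \<and> v \<in> V \<and> degree E v \<ge> 1 \<and>
       0 < \<epsilon> \<and> \<epsilon> < 1 \<and> 0 < \<delta> \<and> \<delta> < 1 \<and> lam > 0 \<and>
       real l \<ge> C * ln (1 / \<delta>) / \<epsilon>\<^sup>2 \<longrightarrow>
       measure (cascade_space E lam l)
         {\<omega> \<in> space (cascade_space E lam l).
            \<bar>degree_estimate E lam l v \<omega> - real (degree E v)\<bar> \<le> \<epsilon> * real (degree E v)}
       \<ge> 1 - \<delta>)"
proof (intro exI[of _ Cc] conjI allI impI)
  show "Cc > 0" using Cc_ge by simp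
  fix V :: "nat set" and E :: "nat set set" and v :: nat and \<epsilon> \<delta> lam :: real and l :: nat
  assume H: "ugraph V E \<and> v \<in> V \<and> degree E v \<ge> 1 \<and>
       0 < \<epsilon> \<and> \<epsilon> < 1 \<and> 0 < \<delta> \<and> \<delta> < 1 \<and> lam > 0 \<and>
       real l \<ge> Cc * ln (1 / \<delta>) / \<epsilon>\<^sup>2"
  hence G: "ugraph V E" and vV: "v \<in> V" and dg: "degree E v \<ge> 1" and e: "0 < \<epsilon>" "\<epsilon> < 1"
    and dl: "0 < \<delta>" "\<delta> < 1" and lam: "lam > 0" and lb: "real l \<ge> Cc * ln (1 / \<delta>) / \<epsilon>\<^sup>2"
    by auto
  have Cpos: "Cc > 0" using Cc_ge by simp
  have lnpos: "ln (1/\<delta>) > 0" using dl by simp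
  have "Cc * ln (1 / \<delta>) / \<epsilon>\<^sup>2 > 0" using Cpos lnpos e by simp
  hence lpos: "l > 0" using lb by linarith
  then obtain k where lk: "l = Suc k" using gr0_implies_Suc by blast
  have hyp: "ln (1/\<delta>) \<le> real (Suc k) * \<epsilon>^2 / Cc"
  proof -
    have "Cc * ln (1 / \<delta>) \<le> real l * \<epsilon>^2" using lb e by (simp add: pos_divide_le_eq)
    thus ?thesis using Cpos lk by (simp add: pos_le_divide_eq mult.commute)
  qed
  define d where "d = real (degree E v)"
  have dpos: "d > 0" using dg by (simp add: d_def)
  define \<mu> where "\<mu> = d * lam"
  have mu: "\<mu> > 0" using dpos lam by (simp add: \<mu>_def)
  define P where "P = PiM E (\<lambda>e. density lborel (exponential_density lam))"
  define Q where "Q = cascade_space E lam l"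
  have Qdef: "Q = PiM {..<l} (\<lambda>i. P)" by (simp add: Q_def P_def cascade_space_def)
  have pP: "prob_space P" unfolding P_def
    by (rule prob_space_PiM) (rule prob_space_exponential_density[OF lam])
  interpret Q: prob_space Q unfolding Qdef by (rule prob_space_PiM) (rule pP)
  have trd: "distributed P lborel (\<lambda>L. second_gap E L v) (exponential_density \<mu>)"
    unfolding P_def \<mu>_def d_def by (rule trace_dist[OF G vV dg lam])
  have sgm: "(\<lambda>L. second_gap E L v) \<in> borel_measurable P"
    using trd by (simp add: distributed_def)
  have Ine: "{..<l} \<noteq> {}" using lpos by auto
  have ind0: "Q.indep_vars (\<lambda>i. P) (\<lambda>i \<omega>. \<omega> i) {..<l}"
    unfolding Qdef by (rule indep_coords) (use Ine pP in auto)
  have ind: "Q.indep_vars (\<lambda>i. borel) (\<lambda>i \<omega>. second_gap E (\<omega> i) v) {..<l}"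
    by (rule Q.indep_vars_compose2[OF ind0]) (rule sgm)
  have dist: "distributed Q lborel (\<lambda>\<omega>. second_gap E (\<omega> i) v) (exponential_density \<mu>)" if "i \<in> {..<l}" for i
    unfolding Qdef by (rule distributed_coord[OF pP that trd])
  have Sd: "distributed Q lborel (\<lambda>\<omega>. \<Sum>i\<in>{..<l}. second_gap E (\<omega> i) v) (erlang_density (card {..<l} - 1) \<mu>)"
    by (rule Q.exponential_distributed_sum[OF _ Ine mu dist ind]) simp
  hence Sd': "distributed Q lborel (\<lambda>\<omega>. \<Sum>i<l. second_gap E (\<omega> i) v) (erlang_density k \<mu>)"
    using lk by simp
  have Zd: "distributed Q lborel (\<lambda>\<omega>. \<mu> * (\<Sum>i<l. second_gap E (\<omega> i) v)) (erlang_density k (\<mu>/\<mu>))"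
    by (rule Q.erlang_distributed_mult_const[OF Sd' mu mu])
  hence Zd1: "distributed Q lborel (\<lambda>\<omega>. \<mu> * (\<Sum>i<l. second_gap E (\<omega> i) v)) (erlang_density k 1)"
    using mu by simp
  define Z where "Z = (\<lambda>\<omega>. \<mu> * (\<Sum>i<l. second_gap E (\<omega> i) v))"
  define \<alpha> where "\<alpha> = real l/(1+\<epsilon>)"
  define \<beta> where "\<beta> = real l/(1-\<epsilon>)"
  have Zm: "Z \<in> measurable Q lborel" using Zd1 by (simp add: distributed_def Z_def)
  have key: "(\<bar>real l/(S*lam) - d\<bar> \<le> \<epsilon>*d) \<longleftrightarrow> (d*lam*S \<in> {\<alpha>..\<beta>})" for S
    unfolding \<alpha>_def \<beta>_def by (rule est_iff[OF dpos lam _ e]) (use lpos in simp)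
  have pw: "(\<bar>degree_estimate E lam l v \<omega> - d\<bar> \<le> \<epsilon> * d) \<longleftrightarrow> Z \<omega> \<in> {\<alpha>..\<beta>}" for \<omega>
  proof -
    have z: "Z \<omega> = d*lam*(\<Sum>i<l. second_gap E (\<omega> i) v)" by (simp only: Z_def \<mu>_def)
    show ?thesis unfolding z degree_estimate_def by (rule key)
  qed
  have seteq: "{\<omega> \<in> space Q. \<bar>degree_estimate E lam l v \<omega> - d\<bar> \<le> \<epsilon> * d} = Z -` {\<alpha>..\<beta>} \<inter> space Q"
    using pw by blast
  have "measure Q (Z -` {\<alpha>..\<beta>} \<inter> space Q) = measure (distr Q lborel Z) {\<alpha>..\<beta>}"
    by (rule measure_distr[symmetric, OF Zm]) simp
  also have "distr Q lborel Z = density lborel (erlang_density k 1)"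
    using Zd1 by (simp add: distributed_def Z_def)
  finally have meq: "measure Q {\<omega> \<in> space Q. \<bar>degree_estimate E lam l v \<omega> - d\<bar> \<le> \<epsilon> * d}
      = measure (density lborel (erlang_density k 1)) {\<alpha>..\<beta>}"
    using seteq by simp
  have "1 - \<delta> \<le> measure (density lborel (erlang_density k 1)) {real (Suc k)/(1+\<epsilon>) .. real (Suc k)/(1-\<epsilon>)}"
    by (rule core[OF e dl hyp])
  thus "1 - \<delta> \<le> measure (cascade_space E lam l)
         {\<omega> \<in> space (cascade_space E lam l).
            \<bar>degree_estimate E lam l v \<omega> - real (degree E v)\<bar> \<le> \<epsilon> * real (degree E v)}"
    using meq lk by (simp add: Q_def d_def \<alpha>_def \<beta>_def)
qed


end
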